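(* Let $\mathbf x_1,\dots,\mathbf x_l\in\mathbb{R}^n$ and $y_1,\dots,y_l\in\{1,-1\}$; set $\bar{\mathbf x}_i=y_i\mathbf x_i$ and let $\overline{\mathbf X}\in\mathbb{R}^{l\times n}$ have $i$-th row $\bar{\mathbf x}_i^T$. For $C>0$ let $\mathbf w^*(C)$ be the optimal solution of the SVM problem $$\min_{\mathbf w}\tfrac12\|\mathbf w\|^2+C\sum_{i=1}^l\big[1-\mathbf w^T(y_i\mathbf x_i)\big]_+,$$ and $\theta^*(C)$ an optimal solution of its dual $\min_{\theta\in[0,1]^l}\frac C2\|\overline{\mathbf X}^T\theta\|^2-\sum_{i=1}^l\theta_i$. Let $0<C_1<\dots<C_{\mathcal K}$ and suppose $\mathbf w^*(C_k)$ is known for some integer $1\le k<\mathcal K$. If $$\tfrac{C_k+C_{k+1}}{2C_k}\langle\mathbf w^*(C_k),\bar{\mathbf x}_i\rangle-\tfrac{C_{k+1}-C_k}{2C_k}\|\mathbf w^*(C_k)\|\,\|\bar{\mathbf x}_i\|>1,$$ then $[\theta^*(C_{k+1})]_i=0$, i.e., $i\in\mathcal R$ (at $C=C_{k+1}$). Similarly, if $$\tfrac{C_k+C_{k+1}}{2C_k}\langle\mathbf w^*(C_k),\bar{\mathbf x}_i\rangle+\tfrac{C_{k+1}-C_k}{2C_k}\|\mathbf w^*(C_k)\|\,\|\bar{\mathbf x}_i\|<1,$$ then $[\theta^*(C_{k+1})]_i=1$, i.e., $i\in\mathcal L$.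
   Context: $[t]_+=\max\{t,0\}$. Primal and dual solutions satisfy $\mathbf w^*(C)=C\overline{\mathbf X}^T\theta^*(C)$. At parameter $C$: $\mathcal R=\{i:\langle\mathbf w^*(C),\bar{\mathbf x}_i\rangle>1\}$ and $\mathcal L=\{i:\langle\mathbf w^*(C),\bar{\mathbf x}_i\rangle<1\}$. *)

theory Defs
  imports "HOL-Analysis.Analysis"
begin

text \<open>Data: xb i = y_i x_i for i in {1..l}, vectors in R^n rendered as real^'n.\<close>

definition svm_primal :: "(nat \<Rightarrow> real^'n) \<Rightarrow> nat \<Rightarrow> real \<Rightarrow> real^'n \<Rightarrow> real" where
  "svm_primal xb l C w = (1/2) * (norm w)^2 + C * (\<Sum>i=1..l. max (1 - inner w (xb i)) 0)"

definition primal_opt :: "(nat \<Rightarrow> real^'n) \<Rightarrow> nat \<Rightarrow> real \<Rightarrow> real^'n \<Rightarrow> bool" where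
  "primal_opt xb l C w \<longleftrightarrow> (\<forall>v. svm_primal xb l C w \<le> svm_primal xb l C v)"

definition dual_feasible :: "nat \<Rightarrow> (nat \<Rightarrow> real) \<Rightarrow> bool" where
  "dual_feasible l \<theta> \<longleftrightarrow> (\<forall>i\<in>{1..l}. 0 \<le> \<theta> i \<and> \<theta> i \<le> 1)"

definition svm_dual :: "(nat \<Rightarrow> real^'n) \<Rightarrow> nat \<Rightarrow> real \<Rightarrow> (nat \<Rightarrow> real) \<Rightarrow> real" where
  "svm_dual xb l C \<theta> = (C/2) * (norm (\<Sum>i=1..l. \<theta> i *\<^sub>R xb i))^2 - (\<Sum>i=1..l. \<theta> i)"

definition dual_opt :: "(nat \<Rightarrow> real^'n) \<Rightarrow> nat \<Rightarrow> real \<Rightarrow> (nat \<Rightarrow> real) \<Rightarrow> bool" where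
  "dual_opt xb l C \<theta> \<longleftrightarrow> dual_feasible l \<theta> \<and>
     (\<forall>\<theta>'. dual_feasible l \<theta>' \<longrightarrow> svm_dual xb l C \<theta> \<le> svm_dual xb l C \<theta>')"

end

theory Submission
  imports Defs
begin


lemma small_t:
  fixes A B d :: real
  assumes h: "\<And>t. 0<t \<Longrightarrow> t \<le> d \<Longrightarrow> 0 \<le> A + t*B" and d: "0 < d" and B: "B \<ge> 0"
  shows "0 \<le> A"
proof (rule ccontr)
  assume A: "\<not> 0 \<le> A"
  show False
  proof (cases "B = 0")
    case True then show ?thesis using h[OF d] A by simp
  next
    case False
    hence Bp: "B > 0" using B by simp
    define t where "t = min d (-A/(2*B))"
    have q: "0 < -A/(2*B)" using A Bp by (intro divide_pos_pos) auto
    have t0: "0 < t" using q d by (simp add: t_def)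
    have td: "t \<le> d" by (simp add: t_def)
    have "t*B \<le> (-A/(2*B))*B" using Bp by (intro mult_right_mono) (auto simp: t_def)
    also have "\<dots> = -A/2" using Bp by simp
    finally have "A + t*B < 0" using A by simp
    with h[OF t0 td] show False by linarith
  qed
qed

definition hinge :: "(nat \<Rightarrow> real^'n) \<Rightarrow> nat \<Rightarrow> real^'n \<Rightarrow> real" where
  "hinge xb l w = (\<Sum>i=1..l. max (1 - inner w (xb i)) 0)"

lemma hinge_convex:
  assumes "0 \<le> t" "t \<le> 1"
  shows "hinge xb l ((1-t) *\<^sub>R w + t *\<^sub>R u) \<le> (1-t) * hinge xb l w + t * hinge xb l u"
proof -
  have "\<And>a b::real. max (1 - ((1-t)*a + t*b)) 0 \<le> (1-t) * max (1-a) 0 + t * max (1-b) 0"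
  proof -
    fix a b :: real
    have e: "1 - ((1-t)*a + t*b) = (1-t)*(1-a) + t*(1-b)" by algebra
    have "(1-t)*(1-a) \<le> (1-t) * max (1-a) 0" using assms by (intro mult_left_mono) auto
    moreover have "t*(1-b) \<le> t * max (1-b) 0" using assms by (intro mult_left_mono) auto
    moreover have "0 \<le> (1-t) * max (1-a) 0" "0 \<le> t * max (1-b) 0" using assms by auto
    ultimately show "?thesis a b" unfolding e by linarith
  qed
  thus ?thesis unfolding hinge_def
    by (simp add: inner_add_left sum_distrib_left sum.distrib[symmetric] sum_mono)
qed

lemma primal_hinge: "svm_primal xb l C w = (1/2)*(norm w)^2 + C * hinge xb l w"
  by (simp add: svm_primal_def hinge_def)

lemma norm_add_scale_sq:
  fixes a d :: "'a::real_inner"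
  shows "(norm (a + t *\<^sub>R d))^2 = (norm a)^2 + 2*t*inner a d + t^2 * (norm d)^2"
proof -
  have "(norm (a + t *\<^sub>R d))^2 = inner (a + t *\<^sub>R d) (a + t *\<^sub>R d)" by (simp add: power2_norm_eq_inner)
  also have "\<dots> = inner a a + 2*t*inner a d + t^2 * inner d d"
    by (simp add: inner_add_left inner_add_right inner_commute[of d a] power2_eq_square algebra_simps)
  finally show ?thesis by (simp add: power2_norm_eq_inner)
qed

lemma var_ineq:
  assumes opt: "primal_opt xb l C w" and C: "C > 0"
  shows "0 \<le> inner w (u - w) + C * (hinge xb l u - hinge xb l w)"
proof -
  have "0 \<le> inner w (u - w) + C * (hinge xb l u - hinge xb l w) + t * ((1/2) * (norm (u-w))^2)"
    if t: "0 < t" "t \<le> 1" for t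
  proof -
    let ?v = "(1-t) *\<^sub>R w + t *\<^sub>R u"
    have "svm_primal xb l C w \<le> svm_primal xb l C ?v" using opt by (simp add: primal_opt_def)
    hence 1: "(1/2)*(norm w)^2 + C * hinge xb l w \<le> (1/2)*(norm ?v)^2 + C * hinge xb l ?v"
      by (simp add: primal_hinge)
    have 2: "C * hinge xb l ?v \<le> C * ((1-t) * hinge xb l w + t * hinge xb l u)"
      using hinge_convex[of t xb l w u] t C by (simp add: mult_left_mono)
    have v: "?v = w + t *\<^sub>R (u - w)" by (simp add: algebra_simps)
    have 3: "(norm ?v)^2 = (norm w)^2 + 2*t*inner w (u-w) + t^2 * (norm (u-w))^2"
      unfolding v by (rule norm_add_scale_sq)
    have "0 \<le> t * (inner w (u-w) + C*(hinge xb l u - hinge xb l w) + t*((1/2)*(norm (u-w))^2))"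
    proof -
      define hw where "hw = hinge xb l w"
      define hu where "hu = hinge xb l u"
      define hv where "hv = hinge xb l ?v"
      define p where "p = inner w (u-w)"
      define q where "q = (norm (u-w))^2"
      define Nw where "Nw = (norm w)^2"
      define Nv where "Nv = (norm ?v)^2"
      have a1: "(1/2)*Nw + C*hw \<le> (1/2)*Nv + C*hv" using 1 by (simp add: hw_def hv_def Nw_def Nv_def)
      have a2: "C*hv \<le> C*((1-t)*hw + t*hu)" using 2 by (simp add: hv_def hw_def hu_def)
      have a3: "Nv = Nw + 2*t*p + t^2*q" using 3 by (simp add: Nv_def Nw_def p_def q_def)
      have e1: "C*((1-t)*hw + t*hu) = C*hw - t*(C*hw) + t*(C*hu)" by algebra
      have e2: "t * (p + C*(hu - hw) + t*((1/2)*q)) = t*p + t*(C*hu) - t*(C*hw) + (1/2)*(t^2*q)"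
        by (simp add: algebra_simps power2_eq_square)
      have "0 \<le> t * (p + C*(hu - hw) + t*((1/2)*q))" unfolding e2 using a1 a2 a3 e1 by linarith
      thus ?thesis by (simp add: hw_def hu_def p_def q_def)
    qed
    thus ?thesis using t by (simp add: zero_le_mult_iff)
  qed
  thus ?thesis by (rule small_t[where d=1]) auto
qed



lemma ball_bound:
  assumes o1: "primal_opt xb l C w" and o2: "primal_opt xb l C' w'" and C: "0 < C" "C \<le> C'"
  shows "norm (w' - ((C+C')/(2*C)) *\<^sub>R w) \<le> (C'-C)/(2*C) * norm w"
proof -
  let ?h = "hinge xb l"
  have i1: "0 \<le> inner w (w' - w) + C * (?h w' - ?h w)" using var_ineq[OF o1 C(1)] .
  have i2: "0 \<le> inner w' (w - w') + C' * (?h w - ?h w')" using var_ineq[OF o2] C by simp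
  define a where "a = inner w w" define b where "b = inner w' w'" define p where "p = inner w w'"
  have j1: "0 \<le> p - a + C * (?h w' - ?h w)" using i1 by (simp add: inner_diff_right a_def p_def)
  have j2: "0 \<le> p - b + C' * (?h w - ?h w')" using i2 by (simp add: inner_diff_right b_def p_def inner_commute)
  have m1: "0 \<le> C' * (p - a + C * (?h w' - ?h w))" using mult_nonneg_nonneg[OF _ j1, of C'] C by simp
  have m2: "0 \<le> C * (p - b + C' * (?h w - ?h w'))" using mult_nonneg_nonneg[OF _ j2, of C] C by simp
  have ex: "C' * (p - a + C * (?h w' - ?h w)) + C * (p - b + C' * (?h w - ?h w')) = C'*p - C'*a + C*p - C*b"
    by (simp add: algebra_simps)
  have key: "C*b - (C+C')*p \<le> - C'*a" using m1 m2 ex by (simp add: algebra_simps)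
  define c where "c = (C+C')/(2*C)"
  have n2: "(norm (w' - c *\<^sub>R w))^2 = b - 2*c*p + c^2*a"
    unfolding power2_norm_eq_inner a_def b_def p_def
    by (simp add: inner_diff_left inner_diff_right inner_commute power2_eq_square algebra_simps)
  have "C * (b - 2*c*p + c^2*a) = C*b - (C+C')*p + (C+C')^2/(4*C) * a"
    using C by (simp add: c_def field_simps power2_eq_square)
  also have "\<dots> \<le> -C'*a + (C+C')^2/(4*C) * a" using key by linarith
  also have "\<dots> = C * (((C'-C)/(2*C))^2 * a)"
    using C by (simp add: field_simps power2_eq_square)
  finally have "b - 2*c*p + c^2*a \<le> ((C'-C)/(2*C))^2 * a" using C by simp
  also have "\<dots> = ((C'-C)/(2*C) * norm w)^2"
    by (simp add: a_def power_mult_distrib power_divide power2_norm_eq_inner[symmetric])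
  finally have "(norm (w' - c *\<^sub>R w))^2 \<le> ((C'-C)/(2*C) * norm w)^2" using n2 by simp
  moreover have "0 \<le> (C'-C)/(2*C) * norm w" using C by simp
  ultimately show ?thesis unfolding c_def by (rule power2_le_imp_le)
qed

lemma ball_inner:
  fixes w w' x :: "'a::real_inner"
  assumes "norm (w' - c *\<^sub>R w) \<le> r"
  shows "c * inner w x - r * norm x \<le> inner w' x" "inner w' x \<le> c * inner w x + r * norm x"
proof -
  have e: "inner w' x = c * inner w x + inner (w' - c *\<^sub>R w) x" by (simp add: inner_diff_left)
  have "\<bar>inner (w' - c *\<^sub>R w) x\<bar> \<le> norm (w' - c *\<^sub>R w) * norm x" by (rule Cauchy_Schwarz_ineq2)
  also have "\<dots> \<le> r * norm x" using assms by (rule mult_right_mono) simp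
  finally have a: "\<bar>inner (w' - c *\<^sub>R w) x\<bar> \<le> r * norm x" .
  show "c * inner w x - r * norm x \<le> inner w' x" using e a by linarith
  show "inner w' x \<le> c * inner w x + r * norm x" using e a by linarith
qed

lemma sum_upd:
  fixes F :: "nat \<Rightarrow> real \<Rightarrow> 'b::ab_group_add"
  assumes fin: "finite A" and iA: "i \<in> A"
  shows "(\<Sum>j\<in>A. F j ((\<theta>(i:=v)) j)) = (\<Sum>j\<in>A. F j (\<theta> j)) + (F i v - F i (\<theta> i))"
proof -
  have r1: "(\<Sum>j\<in>A. F j ((\<theta>(i:=v)) j)) = F i ((\<theta>(i:=v)) i) + (\<Sum>j\<in>A-{i}. F j ((\<theta>(i:=v)) j))"
    by (rule sum.remove[OF fin iA])
  have r2: "(\<Sum>j\<in>A. F j (\<theta> j)) = F i (\<theta> i) + (\<Sum>j\<in>A-{i}. F j (\<theta> j))"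
    by (rule sum.remove[OF fin iA])
  have r3: "(\<Sum>j\<in>A-{i}. F j ((\<theta>(i:=v)) j)) = (\<Sum>j\<in>A-{i}. F j (\<theta> j))"
    by (rule sum.cong) auto
  show ?thesis unfolding r1 r2 r3 by (simp add: algebra_simps)
qed

lemma dual_step:
  assumes i: "i \<in> {1..l}"
  shows "svm_dual xb l C (\<theta>(i := \<theta> i + s)) - svm_dual xb l C \<theta>
     = s * (inner (C *\<^sub>R (\<Sum>j=1..l. \<theta> j *\<^sub>R xb j)) (xb i) - 1) + s^2 * (C/2 * (norm (xb i))^2)"
proof -
  let ?S = "\<Sum>j=1..l. \<theta> j *\<^sub>R xb j"
  have s1: "(\<Sum>j=1..l. (\<theta>(i := \<theta> i + s)) j *\<^sub>R xb j) = ?S + s *\<^sub>R xb i"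
    using sum_upd[of "{1..l}" i "\<lambda>j v. v *\<^sub>R xb j" \<theta> "\<theta> i + s"] i by (simp add: algebra_simps)
  have s2: "(\<Sum>j=1..l. (\<theta>(i := \<theta> i + s)) j) = (\<Sum>j=1..l. \<theta> j) + s"
    using sum_upd[of "{1..l}" i "\<lambda>j v. v" \<theta> "\<theta> i + s"] i by simp
  have n: "(norm (?S + s *\<^sub>R xb i))^2 = (norm ?S)^2 + 2 * s * inner ?S (xb i) + s^2 * (norm (xb i))^2"
    by (rule norm_add_scale_sq)
  show ?thesis unfolding svm_dual_def s1 s2 n
    by (simp add: algebra_simps power2_eq_square)
qed

lemma dual_kkt:
  assumes opt: "dual_opt xb l C \<theta>" and C: "C > 0" and i: "i \<in> {1..l}"
  shows "\<theta> i < 1 \<Longrightarrow> 1 \<le> inner (C *\<^sub>R (\<Sum>j=1..l. \<theta> j *\<^sub>R xb j)) (xb i)"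
    and "0 < \<theta> i \<Longrightarrow> inner (C *\<^sub>R (\<Sum>j=1..l. \<theta> j *\<^sub>R xb j)) (xb i) \<le> 1"
proof -
  let ?a = "inner (C *\<^sub>R (\<Sum>j=1..l. \<theta> j *\<^sub>R xb j)) (xb i)"
  let ?B = "C/2 * (norm (xb i))^2"
  have feas: "dual_feasible l \<theta>" and mn: "\<And>\<theta>'. dual_feasible l \<theta>' \<Longrightarrow> svm_dual xb l C \<theta> \<le> svm_dual xb l C \<theta>'"
    using opt by (auto simp: dual_opt_def)
  have B: "0 \<le> ?B" using C by simp
  have gen: "0 \<le> s * (?a - 1) + s^2 * ?B" if "dual_feasible l (\<theta>(i := \<theta> i + s))" for s
    using mn[OF that] dual_step[OF i, of xb C \<theta> s] by simp
  have fe: "dual_feasible l (\<theta>(i := \<theta> i + s))" if "0 \<le> \<theta> i + s" "\<theta> i + s \<le> 1" for s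
    using feas that by (auto simp: dual_feasible_def)
  show "1 \<le> ?a" if lt: "\<theta> i < 1"
  proof -
    have "0 \<le> (?a - 1) + t * ?B" if "0 < t" "t \<le> 1 - \<theta> i" for t
    proof -
      have "0 \<le> \<theta> i" using feas i by (auto simp: dual_feasible_def)
      hence "0 \<le> t * ((?a - 1) + t * ?B)" using gen[OF fe[of t]] that
        by (simp add: algebra_simps power2_eq_square)
      thus ?thesis using that by (simp add: zero_le_mult_iff)
    qed
    hence "0 \<le> ?a - 1" by (rule small_t[where d="1 - \<theta> i"]) (use lt B in auto)
    thus ?thesis by simp
  qed
  show "?a \<le> 1" if gt: "0 < \<theta> i"
  proof -
    have "0 \<le> (1 - ?a) + t * ?B" if "0 < t" "t \<le> \<theta> i" for t
    proof -
      have "\<theta> i \<le> 1" using feas i by (auto simp: dual_feasible_def)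
      hence "0 \<le> t * ((1 - ?a) + t * ?B)" using gen[OF fe[of "-t"]] that
        by (simp add: algebra_simps power2_eq_square)
      thus ?thesis using that by (simp add: zero_le_mult_iff)
    qed
    hence "0 \<le> 1 - ?a" by (rule small_t[where d="\<theta> i"]) (use gt B in auto)
    thus ?thesis by simp
  qed
qed

lemma dual_to_primal:
  assumes opt: "dual_opt xb l C \<theta>" and C: "C > 0"
  shows "primal_opt xb l C (C *\<^sub>R (\<Sum>j=1..l. \<theta> j *\<^sub>R xb j))"
proof -
  define w where "w = C *\<^sub>R (\<Sum>j=1..l. \<theta> j *\<^sub>R xb j)"
  have feas: "\<And>j. j \<in> {1..l} \<Longrightarrow> 0 \<le> \<theta> j \<and> \<theta> j \<le> 1" using opt by (auto simp: dual_opt_def dual_feasible_def)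
  have inn: "inner u w = C * (\<Sum>j=1..l. \<theta> j * inner u (xb j))" for u
    by (simp add: w_def inner_sum_right sum_distrib_left)
  have eqj: "max (1 - inner w (xb j)) 0 = \<theta> j * (1 - inner w (xb j))" if j: "j \<in> {1..l}" for j
  proof -
    have k1: "\<theta> j < 1 \<Longrightarrow> 1 \<le> inner w (xb j)" using dual_kkt(1)[OF opt C j] by (simp add: w_def)
    have k2: "0 < \<theta> j \<Longrightarrow> inner w (xb j) \<le> 1" using dual_kkt(2)[OF opt C j] by (simp add: w_def)
    show ?thesis using feas[OF j] k1 k2
      by (cases "\<theta> j = 0"; cases "\<theta> j = 1") (auto simp: max_def)
  qed
  have gej: "\<theta> j * (1 - inner v (xb j)) \<le> max (1 - inner v (xb j)) 0" if j: "j \<in> {1..l}" for j v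
  proof -
    have "\<theta> j * (1 - inner v (xb j)) \<le> \<theta> j * max (1 - inner v (xb j)) 0"
      using feas[OF j] by (intro mult_left_mono) auto
    also have "\<dots> \<le> 1 * max (1 - inner v (xb j)) 0" using feas[OF j] by (intro mult_right_mono) auto
    finally show ?thesis by simp
  qed
  have lin: "C * (\<Sum>j=1..l. \<theta> j * (1 - inner u (xb j))) = C * (\<Sum>j=1..l. \<theta> j) - inner u w" for u
    by (simp add: inn right_diff_distrib sum_subtractf algebra_simps)
  show ?thesis unfolding primal_opt_def w_def[symmetric]
  proof
    fix v
    have "svm_primal xb l C w = (1/2)*(norm w)^2 + C * (\<Sum>j=1..l. \<theta> j * (1 - inner w (xb j)))"
      unfolding svm_primal_def using sum.cong[OF refl eqj, of "{1..l}"] by simp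
    also have "\<dots> = (1/2)*(norm w)^2 + C * (\<Sum>j=1..l. \<theta> j) - inner w w" using lin[of w] by simp
    also have "\<dots> \<le> (1/2)*(norm v)^2 + C * (\<Sum>j=1..l. \<theta> j) - inner v w"
    proof -
      have "0 \<le> inner (v - w) (v - w)" by simp
      thus ?thesis unfolding power2_norm_eq_inner
        by (simp add: inner_diff_left inner_diff_right inner_commute algebra_simps)
    qed
    also have "\<dots> = (1/2)*(norm v)^2 + C * (\<Sum>j=1..l. \<theta> j * (1 - inner v (xb j)))" using lin[of v] by simp
    also have "\<dots> \<le> svm_primal xb l C v" unfolding svm_primal_def
      using C gej by (auto intro!: mult_left_mono sum_mono)
    finally show "svm_primal xb l C w \<le> svm_primal xb l C v" .
  qed
qed

lemma Cs_mono:
  assumes "\<forall>j\<in>{1..<K}. Cs j < Cs (Suc j)" "1 \<le> k" "k < K"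
  shows "Cs 1 \<le> (Cs k :: real)"
  using assms(2,3)
proof (induction k)
  case 0 then show ?case by simp
next
  case (Suc k)
  show ?case
  proof (cases "k = 0")
    case True then show ?thesis by simp
  next
    case False
    hence "Cs 1 \<le> Cs k" using Suc by simp
    moreover have "Cs k < Cs (Suc k)" using assms(1) False Suc.prems by auto
    ultimately show ?thesis by simp
  qed
qed

theorem corollary4:
  fixes x :: "nat \<Rightarrow> real^'n" and y :: "nat \<Rightarrow> real" and l :: nat
    and Cs :: "nat \<Rightarrow> real" and K k :: nat and wk :: "real^'n" and i :: nat
  assumes y: "\<forall>j\<in>{1..l}. y j = 1 \<or> y j = -1"
    and Cpos: "0 < Cs 1"
    and Cinc: "\<forall>j\<in>{1..<K}. Cs j < Cs (Suc j)"
    and k: "1 \<le> k" "k < K"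
    and i: "i \<in> {1..l}"
    and wk: "primal_opt (\<lambda>j. y j *\<^sub>R x j) l (Cs k) wk"
  shows
    "(((Cs k + Cs (Suc k)) / (2 * Cs k)) * inner wk (y i *\<^sub>R x i)
        - ((Cs (Suc k) - Cs k) / (2 * Cs k)) * norm wk * norm (y i *\<^sub>R x i) > 1
      \<longrightarrow> (\<forall>\<theta>. dual_opt (\<lambda>j. y j *\<^sub>R x j) l (Cs (Suc k)) \<theta> \<longrightarrow> \<theta> i = 0)
        \<and> (\<forall>w. primal_opt (\<lambda>j. y j *\<^sub>R x j) l (Cs (Suc k)) w \<longrightarrow> inner w (y i *\<^sub>R x i) > 1))
     \<and> (((Cs k + Cs (Suc k)) / (2 * Cs k)) * inner wk (y i *\<^sub>R x i)
        + ((Cs (Suc k) - Cs k) / (2 * Cs k)) * norm wk * norm (y i *\<^sub>R x i) < 1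
      \<longrightarrow> (\<forall>\<theta>. dual_opt (\<lambda>j. y j *\<^sub>R x j) l (Cs (Suc k)) \<theta> \<longrightarrow> \<theta> i = 1)
        \<and> (\<forall>w. primal_opt (\<lambda>j. y j *\<^sub>R x j) l (Cs (Suc k)) w \<longrightarrow> inner w (y i *\<^sub>R x i) < 1))"
proof -
  define xb where "xb = (\<lambda>j. y j *\<^sub>R x j)"
  define C where "C = Cs k"
  define C' where "C' = Cs (Suc k)"
  have C0: "0 < C" using Cs_mono[OF Cinc k] Cpos by (simp add: C_def)
  have CC: "C \<le> C'" using Cinc k unfolding C_def C'_def by (simp add: less_imp_le)
  have xi: "y i *\<^sub>R x i = xb i" by (simp add: xb_def)
  define c where "c = (C + C') / (2 * C)"
  define r where "r = (C' - C) / (2 * C) * norm wk"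
  have wk': "primal_opt xb l C wk" using wk by (simp add: xb_def C_def)
  have ball: "norm (w' - c *\<^sub>R wk) \<le> r" if "primal_opt xb l C' w'" for w'
    using ball_bound[OF wk' that C0 CC] by (simp add: c_def r_def)
  have C'0: "0 < C'" using C0 CC by simp
  have P1: "(\<forall>\<theta>. dual_opt xb l C' \<theta> \<longrightarrow> \<theta> i = 0) \<and> (\<forall>w. primal_opt xb l C' w \<longrightarrow> inner w (xb i) > 1)"
    if H: "c * inner wk (xb i) - r * norm (xb i) > 1"
  proof -
    have pr: "inner w (xb i) > 1" if "primal_opt xb l C' w" for w
      using ball_inner(1)[OF ball[OF that], of "xb i"] H by simp
    have "\<theta> i = 0" if o: "dual_opt xb l C' \<theta>" for \<theta>
    proof -
      have "inner (C' *\<^sub>R (\<Sum>j=1..l. \<theta> j *\<^sub>R xb j)) (xb i) > 1"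
        using pr[OF dual_to_primal[OF o C'0]] .
      hence "\<not> 0 < \<theta> i" using dual_kkt(2)[OF o C'0 i] by linarith
      moreover have "0 \<le> \<theta> i" using o i by (auto simp: dual_opt_def dual_feasible_def)
      ultimately show ?thesis by simp
    qed
    with pr show ?thesis by blast
  qed
  have P2: "(\<forall>\<theta>. dual_opt xb l C' \<theta> \<longrightarrow> \<theta> i = 1) \<and> (\<forall>w. primal_opt xb l C' w \<longrightarrow> inner w (xb i) < 1)"
    if H: "c * inner wk (xb i) + r * norm (xb i) < 1"
  proof -
    have pr: "inner w (xb i) < 1" if "primal_opt xb l C' w" for w
      using ball_inner(2)[OF ball[OF that], of "xb i"] H by simp
    have "\<theta> i = 1" if o: "dual_opt xb l C' \<theta>" for \<theta>
    proof -
      have "inner (C' *\<^sub>R (\<Sum>j=1..l. \<theta> j *\<^sub>R xb j)) (xb i) < 1"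
        using pr[OF dual_to_primal[OF o C'0]] .
      hence "\<not> \<theta> i < 1" using dual_kkt(1)[OF o C'0 i] by linarith
      moreover have "\<theta> i \<le> 1" using o i by (auto simp: dual_opt_def dual_feasible_def)
      ultimately show ?thesis by simp
    qed
    with pr show ?thesis by blast
  qed
  show ?thesis using P1 P2
    unfolding xi c_def r_def C_def[symmetric] C'_def[symmetric] xb_def[symmetric]
    by (simp add: mult.assoc)
qed

end
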